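(* Let $\Sigma_1$ and $\Sigma_2$ be connected graphs (multiple edges allowed, no loops) with $n$ vertices each containing exactly one cycle. If $\overline{\Sigma_1^*}\cong\overline{\Sigma_2^*}$, then either $\Sigma_1\cong\Sigma_2$, or $\{\Sigma_1,\Sigma_2\}$ is one of the following two pairs of graphs on vertices $a,b,c,d$: (i) the graph with a double edge $ab$ and edges $ac$, $ad$, together with the graph consisting of a triangle $abc$ and the edge $cd$; (ii) the graph with a double edge $ab$ and edges $ac$, $bd$, together with the 4-cycle $abcd$.
   Context: A cycle may consist of two vertices joined by two parallel edges. For such a graph $\Sigma$, the dual graph $\Sigma^*$ has as vertices the edges of $\Sigma$; two vertices are joined by an edge if the corresponding edges have a common endpoint, except that if two edges of $\Sigma$ form a cycle (i.e., are parallel edges), the corresponding vertices of $\Sigma^*$ are joined by a dotted edge. $\overline{\Sigma^*}$ denotes $\Sigma^*$ with the dotted edge removed (if there is one), and $\overline{\Sigma^*}=\Sigma^*$ otherwise. *)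

theory Defs
  imports Main
begin

text \<open>Parallel edges are distinct edges e, e' with I e = I e'.\<close>

definition multigraph :: "'v set \<Rightarrow> 'e set \<Rightarrow> ('e \<Rightarrow> 'v set) \<Rightarrow> bool" where
  "multigraph V E I \<longleftrightarrow> finite V \<and> finite E \<and> (\<forall>e\<in>E. I e \<subseteq> V \<and> card (I e) = 2)"

definition adj_rel :: "'e set \<Rightarrow> ('e \<Rightarrow> 'v set) \<Rightarrow> ('v \<times> 'v) set" where
  "adj_rel E I = {(u, v). \<exists>e\<in>E. I e = {u, v}}"

definition mg_connected :: "'v set \<Rightarrow> 'e set \<Rightarrow> ('e \<Rightarrow> 'v set) \<Rightarrow> bool" where
  "mg_connected V E I \<longleftrightarrow> (\<forall>u\<in>V. \<forall>v\<in>V. (u, v) \<in> (adj_rel E I)\<^sup>*)"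

text \<open>A cycle (as a subgraph, given by its edge set): a nonempty set C of edges whose
  spanned subgraph is connected and in which every vertex has degree exactly 2.
  Two parallel edges form a cycle of length 2.\<close>

definition is_cycle :: "'e set \<Rightarrow> ('e \<Rightarrow> 'v set) \<Rightarrow> 'e set \<Rightarrow> bool" where
  "is_cycle E I C \<longleftrightarrow> C \<subseteq> E \<and> C \<noteq> {} \<and>
     mg_connected (\<Union>(I ` C)) C I \<and>
     (\<forall>v\<in>\<Union>(I ` C). card {e\<in>C. v \<in> I e} = 2)"

definition unique_cycle :: "'e set \<Rightarrow> ('e \<Rightarrow> 'v set) \<Rightarrow> bool" where
  "unique_cycle E I \<longleftrightarrow> (\<exists>!C. is_cycle E I C)"

text \<open>Adjacency in the dual graph with the dotted edge removed: distinct edges with a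
  common endpoint which are not parallel.\<close>

definition dual_bar_adj :: "('e \<Rightarrow> 'v set) \<Rightarrow> 'e \<Rightarrow> 'e \<Rightarrow> bool" where
  "dual_bar_adj I e e' \<longleftrightarrow> e \<noteq> e' \<and> I e \<inter> I e' \<noteq> {} \<and> I e \<noteq> I e'"

definition dual_bar_iso :: "'e1 set \<Rightarrow> ('e1 \<Rightarrow> 'v1 set) \<Rightarrow> 'e2 set \<Rightarrow> ('e2 \<Rightarrow> 'v2 set) \<Rightarrow> bool" where
  "dual_bar_iso E1 I1 E2 I2 \<longleftrightarrow> (\<exists>g. bij_betw g E1 E2 \<and>
     (\<forall>e\<in>E1. \<forall>e'\<in>E1. dual_bar_adj I1 e e' \<longleftrightarrow> dual_bar_adj I2 (g e) (g e')))"

definition mg_iso :: "'v1 set \<Rightarrow> 'e1 set \<Rightarrow> ('e1 \<Rightarrow> 'v1 set) \<Rightarrow>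
                      'v2 set \<Rightarrow> 'e2 set \<Rightarrow> ('e2 \<Rightarrow> 'v2 set) \<Rightarrow> bool" where
  "mg_iso V1 E1 I1 V2 E2 I2 \<longleftrightarrow> (\<exists>f g. bij_betw f V1 V2 \<and> bij_betw g E1 E2 \<and>
     (\<forall>e\<in>E1. I2 (g e) = f ` I1 e))"

text \<open>The exceptional graphs, on vertices a,b,c,d = 0,1,2,3 with edges 0,1,2,3.\<close>

definition exV :: "nat set" where "exV = {0, 1, 2, 3}"
definition exE :: "nat set" where "exE = {0, 1, 2, 3}"

definition exA1 :: "nat \<Rightarrow> nat set" where
  "exA1 e = (if e = 0 then {0, 1} else if e = 1 then {0, 1} else if e = 2 then {0, 2} else {0, 3})"
definition exB1 :: "nat \<Rightarrow> nat set" where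
  "exB1 e = (if e = 0 then {0, 1} else if e = 1 then {1, 2} else if e = 2 then {0, 2} else {2, 3})"
definition exA2 :: "nat \<Rightarrow> nat set" where
  "exA2 e = (if e = 0 then {0, 1} else if e = 1 then {0, 1} else if e = 2 then {0, 2} else {1, 3})"
definition exB2 :: "nat \<Rightarrow> nat set" where
  "exB2 e = (if e = 0 then {0, 1} else if e = 1 then {1, 2} else if e = 2 then {2, 3} else {3, 0})"

end

theory Submission
  imports Defs
begin

definition star :: "'e set \<Rightarrow> ('e \<Rightarrow> 'v set) \<Rightarrow> 'v \<Rightarrow> 'e set" where
  "star E I v = {e\<in>E. v \<in> I e}"

definition nbr :: "'e set \<Rightarrow> ('e \<Rightarrow> 'v set) \<Rightarrow> 'e \<Rightarrow> 'e set" where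
  "nbr E I e = {x\<in>E. dual_bar_adj I e x}"

locale ucg =
  fixes V :: "'v set" and E :: "'e set" and I :: "'e \<Rightarrow> 'v set"
  assumes mg: "multigraph V E I" and conn: "mg_connected V E I" and uc: "unique_cycle E I"
begin

lemma finV: "finite V" and finE: "finite E" using mg unfolding multigraph_def by auto
lemma IV: "e \<in> E \<Longrightarrow> I e \<subseteq> V" using mg unfolding multigraph_def by auto
lemma card2: "e \<in> E \<Longrightarrow> card (I e) = 2" using mg unfolding multigraph_def by auto
lemma two: assumes "e \<in> E" obtains a b where "a \<noteq> b" "I e = {a,b}"
  using card2[OF assms] by (meson card_2_iff)

lemma closed:
  assumes "u \<in> W" "u \<in> V" "\<And>e. e \<in> E \<Longrightarrow> I e \<inter> W \<noteq> {} \<Longrightarrow> I e \<subseteq> W"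
  shows "V \<subseteq> W"
proof
  fix v assume "v \<in> V"
  then have "(u,v) \<in> (adj_rel E I)\<^sup>*" using conn assms(2) unfolding mg_connected_def by blast
  then show "v \<in> W"
  proof (induction rule: rtrancl_induct)
    case base then show ?case using assms(1) .
  next
    case (step y z)
    then obtain e where "e \<in> E" "I e = {y,z}" unfolding adj_rel_def by auto
    then show ?case using step assms(3)[of e] by auto
  qed
qed

lemma uniq: "is_cycle E I C1 \<Longrightarrow> is_cycle E I C2 \<Longrightarrow> C1 = C2"
  using uc unfolding unique_cycle_def by blast

lemma cyc2: assumes "e \<in> E" "e' \<in> E" "e \<noteq> e'" "I e = I e'"
  shows "is_cycle E I {e,e'}"
proof -
  obtain a b where ab: "a \<noteq> b" "I e = {a,b}" using two[OF assms(1)] .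
  have un: "\<Union>(I ` {e,e'}) = {a,b}" using ab assms by auto
  have r1: "(a,b) \<in> adj_rel {e,e'} I" "(b,a) \<in> adj_rel {e,e'} I"
    unfolding adj_rel_def using ab by auto
  have conn2: "mg_connected {a,b} {e,e'} I" unfolding mg_connected_def using r1 by blast
  have "{x\<in>{e,e'}. v \<in> I x} = {e,e'}" if "v \<in> {a,b}" for v using that ab assms by auto
  then show ?thesis unfolding is_cycle_def un using conn2 assms by auto
qed

lemma cyc3: assumes "x \<in> E" "y \<in> E" "z \<in> E" "a \<noteq> b" "b \<noteq> c" "a \<noteq> c"
  "I x = {a,b}" "I y = {b,c}" "I z = {c,a}"
  shows "is_cycle E I {x,y,z}"
proof -
  have d: "x \<noteq> y" "y \<noteq> z" "x \<noteq> z" using assms by (auto simp: doubleton_eq_iff)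
  have un: "\<Union>(I ` {x,y,z}) = {a,b,c}" using assms by auto
  have r: "(a,b) \<in> adj_rel {x,y,z} I" "(b,a) \<in> adj_rel {x,y,z} I"
     "(b,c) \<in> adj_rel {x,y,z} I" "(c,b) \<in> adj_rel {x,y,z} I"
     "(a,c) \<in> adj_rel {x,y,z} I" "(c,a) \<in> adj_rel {x,y,z} I"
    unfolding adj_rel_def using assms by auto
  have cn: "mg_connected {a,b,c} {x,y,z} I" unfolding mg_connected_def using r by blast
  have "{e\<in>{x,y,z}. a \<in> I e} = {x,z}" "{e\<in>{x,y,z}. b \<in> I e} = {x,y}"
       "{e\<in>{x,y,z}. c \<in> I e} = {y,z}" using assms by auto
  then have "\<forall>v\<in>{a,b,c}. card {e\<in>{x,y,z}. v \<in> I e} = 2" using d by auto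
  then show ?thesis unfolding is_cycle_def un using cn assms by auto
qed

lemma cyc4: assumes "x \<in> E" "y \<in> E" "z \<in> E" "w \<in> E" "distinct [a,b,c,d]"
  "I x = {a,b}" "I y = {b,c}" "I z = {c,d}" "I w = {d,a}"
  shows "is_cycle E I {x,y,z,w}"
proof -
  have d: "distinct [x,y,z,w]" using assms by (auto simp: doubleton_eq_iff)
  have un: "\<Union>(I ` {x,y,z,w}) = {a,b,c,d}" using assms by auto
  let ?R = "adj_rel {x,y,z,w} I"
  have r: "(a,b) \<in> ?R" "(b,a) \<in> ?R" "(b,c) \<in> ?R" "(c,b) \<in> ?R"
     "(c,d) \<in> ?R" "(d,c) \<in> ?R" "(d,a) \<in> ?R" "(a,d) \<in> ?R"
    unfolding adj_rel_def using assms by auto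
  have "(u,v) \<in> ?R\<^sup>*" if "u \<in> {a,b,c,d}" "v \<in> {a,b,c,d}" for u v
  proof -
    have ra: "(a,t) \<in> ?R\<^sup>*" if "t \<in> {a,b,c,d}" for t
      using that r by (auto intro: rtrancl_into_rtrancl)
    have ar: "(t,a) \<in> ?R\<^sup>*" if "t \<in> {a,b,c,d}" for t
      using that r by (auto intro: converse_rtrancl_into_rtrancl)
    show ?thesis using ra[OF that(2)] ar[OF that(1)] by (meson rtrancl_trans)
  qed
  then have cn: "mg_connected {a,b,c,d} {x,y,z,w} I" unfolding mg_connected_def by blast
  have "{e\<in>{x,y,z,w}. a \<in> I e} = {x,w}" "{e\<in>{x,y,z,w}. b \<in> I e} = {x,y}"
       "{e\<in>{x,y,z,w}. c \<in> I e} = {y,z}" "{e\<in>{x,y,z,w}. d \<in> I e} = {z,w}" using assms by auto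
  then have "\<forall>v\<in>{a,b,c,d}. card {e\<in>{x,y,z,w}. v \<in> I e} = 2" using d by auto
  then show ?thesis unfolding is_cycle_def un using cn assms by auto
qed


lemma three_par: assumes "e \<in> E" "e' \<in> E" "e'' \<in> E" "e \<noteq> e'" "e \<noteq> e''" "e' \<noteq> e''"
  "I e = I e'" "I e = I e''" shows False
proof -
  have "{e,e'} = {e,e''}" using uniq[OF cyc2[of e e'] cyc2[of e e'']] assms by auto
  then show False using assms by (auto simp: doubleton_eq_iff)
qed

lemma star_nonempty: assumes "card V \<ge> 2" "v \<in> V" shows "star E I v \<noteq> {}"
proof
  assume h: "star E I v = {}"
  have "V \<subseteq> {v}" by (rule closed[of v]) (use assms h in \<open>auto simp: star_def\<close>)
  then have "card V \<le> card {v}" by (intro card_mono) auto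
  then have "card V \<le> 1" by simp
  then show False using assms by auto
qed

lemma star_inj: assumes "card V \<ge> 3" "u \<in> V" "v \<in> V" "u \<noteq> v" "star E I u = star E I v"
  shows False
proof -
  have "V \<subseteq> {u,v}"
  proof (rule closed[of u])
    fix e assume e: "e \<in> E" "I e \<inter> {u,v} \<noteq> {}"
    then have "u \<in> I e \<and> v \<in> I e" using assms(5) unfolding star_def by blast
    moreover obtain a b where "a \<noteq> b" "I e = {a,b}" using two[OF e(1)] .
    ultimately show "I e \<subseteq> {u,v}" using assms(4) by auto
  qed (use assms in auto)
  then have "card V \<le> card {u,v}" by (intro card_mono) auto
  also have "\<dots> \<le> 2" by (simp add: card_insert_if)
  finally have "card V \<le> 2" .
  then show False using assms by auto
qed

lemma leaf_nb: assumes "card V \<ge> 3" "e \<in> E" "I e = {u,v}" "star E I u = {e}" "star E I v = {e}"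
  shows False
proof -
  have "u \<in> V" using IV[OF assms(2)] assms(3) by auto
  have "V \<subseteq> {u,v}"
  proof (rule closed[of u])
    fix x assume x: "x \<in> E" "I x \<inter> {u,v} \<noteq> {}"
    then have "x \<in> star E I u \<or> x \<in> star E I v" unfolding star_def by auto
    then have "x = e" using assms by auto
    then show "I x \<subseteq> {u,v}" using assms by auto
  qed (use \<open>u \<in> V\<close> in auto)
  then have "card V \<le> card {u,v}" by (intro card_mono) auto
  also have "\<dots> \<le> 2" by (simp add: card_insert_if)
  finally have "card V \<le> 2" .
  then show False using assms by auto
qed


lemma twins: assumes "e \<in> E" "e' \<in> E" "I e \<inter> I e' = {}" "nbr E I e = nbr E I e'"
  shows "card V = 4"
proof -
  obtain a b where ab: "a \<noteq> b" "I e = {a,b}" using two[OF assms(1)] .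
  obtain c d where cd: "c \<noteq> d" "I e' = {c,d}" using two[OF assms(2)] .
  have "V \<subseteq> I e \<union> I e'"
  proof (rule closed[of a])
    fix x assume x: "x \<in> E" "I x \<inter> (I e \<union> I e') \<noteq> {}"
    obtain p q where pq: "p \<noteq> q" "I x = {p,q}" using two[OF x(1)] .
    show "I x \<subseteq> I e \<union> I e'"
    proof (cases "I x = I e \<or> I x = I e'")
      case True then show ?thesis by auto
    next
      case False
      then have ne: "x \<noteq> e" "x \<noteq> e'" by auto
      show ?thesis
      proof (cases "I x \<inter> I e \<noteq> {}")
        case True
        then have "x \<in> nbr E I e" using False ne x unfolding nbr_def dual_bar_adj_def by auto
        then have "x \<in> nbr E I e'" using assms by simp
        then have "I x \<inter> I e' \<noteq> {}" unfolding nbr_def dual_bar_adj_def by auto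
        then show ?thesis using True pq assms(3) by auto
      next
        case f2: False
        then have "I x \<inter> I e' \<noteq> {}" using x by auto
        then have "x \<in> nbr E I e'" using False ne x unfolding nbr_def dual_bar_adj_def by auto
        then have "x \<in> nbr E I e" using assms by simp
        then have "I x \<inter> I e \<noteq> {}" unfolding nbr_def dual_bar_adj_def by auto
        then show ?thesis using f2 by auto
      qed
    qed
  qed (use ab IV[OF assms(1)] in auto)
  moreover have "I e \<union> I e' \<subseteq> V" using IV assms by auto
  ultimately have "V = I e \<union> I e'" by auto
  then show ?thesis using assms(3) card2 assms(1,2) by (simp add: card_Un_disjoint ab cd)
qed

lemma tri_odd: assumes "x \<in> E" "y \<in> E" "z \<in> E" "a \<noteq> b" "b \<noteq> c" "a \<noteq> c"
  "I x = {a,b}" "I y = {b,c}" "I z = {c,a}" "e \<in> E" "e \<notin> {x,y,z}"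
  "I e \<inter> I x \<noteq> {}" "I e \<inter> I y \<noteq> {}" "I e \<inter> I z \<noteq> {}"
  shows False
proof -
  obtain p q where pq: "p \<noteq> q" "I e = {p,q}" using two[OF assms(10)] .
  have "\<exists>t\<in>{x,y,z}. I e = I t" using assms(4-9,12-14) pq by auto
  then obtain t where t: "t \<in> {x,y,z}" "I e = I t" by blast
  have "is_cycle E I {e,t}" using cyc2[of e t] t assms by auto
  moreover have "is_cycle E I {x,y,z}" using cyc3 assms by blast
  ultimately have "{e,t} = {x,y,z}" using uniq by blast
  then show False using assms(11) by auto
qed

definition sh :: "'e \<Rightarrow> 'e \<Rightarrow> bool" where "sh e t \<longleftrightarrow> I e \<inter> I t \<noteq> {}"

definition even3 :: "'e \<Rightarrow> 'e \<Rightarrow> 'e \<Rightarrow> 'e \<Rightarrow> bool" where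
  "even3 e x y z \<longleftrightarrow> \<not>(sh e x \<and> sh e y \<and> sh e z) \<and> (sh e x \<longrightarrow> sh e y \<or> sh e z)
     \<and> (sh e y \<longrightarrow> sh e x \<or> sh e z) \<and> (sh e z \<longrightarrow> sh e x \<or> sh e y)"

lemma tri_even: assumes "x \<in> E" "y \<in> E" "z \<in> E" "a \<noteq> b" "b \<noteq> c" "a \<noteq> c"
  "I x = {a,b}" "I y = {b,c}" "I z = {c,a}" "e \<in> E" "e \<notin> {x,y,z}"
  shows "even3 e x y z"
  using tri_odd[OF assms] assms(4-9) unfolding even3_def sh_def by blast

lemma star_triple: assumes "x \<in> E" "y \<in> E" "z \<in> E" "distinct [v,a,b,c]"
  "I x = {v,a}" "I y = {v,b}" "I z = {v,c}"
  "\<And>e. e \<in> E \<Longrightarrow> e \<notin> {x,y,z} \<Longrightarrow> even3 e x y z"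
  shows "card V = 4"
proof -
  have "V \<subseteq> {v,a,b,c}"
  proof (rule closed[of v])
    fix e assume e: "e \<in> E" "I e \<inter> {v,a,b,c} \<noteq> {}"
    show "I e \<subseteq> {v,a,b,c}"
    proof (cases "e \<in> {x,y,z}")
      case True then show ?thesis using assms by auto
    next
      case False
      have ev: "even3 e x y z" using assms(8) e False by auto
      obtain p q where pq: "p \<noteq> q" "I e = {p,q}" using two[OF e(1)] .
      show ?thesis using ev e(2) assms(4-7) pq unfolding even3_def sh_def by auto
    qed
  qed (use IV assms in auto)
  moreover have "{v,a,b,c} \<subseteq> V" using IV[OF assms(1)] IV[OF assms(2)] IV[OF assms(3)] assms(5-7) by auto
  ultimately show ?thesis using assms(4) by (simp add: subset_antisym)
qed

end

lemma common_vertex: assumes "finite X" "X \<noteq> {}" "\<And>e. e \<in> X \<Longrightarrow> card (I e) = 2"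
  "\<And>e e'. e \<in> X \<Longrightarrow> e' \<in> X \<Longrightarrow> I e \<inter> I e' \<noteq> {}"
  "\<And>e e' e''. e \<in> X \<Longrightarrow> e' \<in> X \<Longrightarrow> e'' \<in> X \<Longrightarrow> e \<noteq> e' \<Longrightarrow> e \<noteq> e'' \<Longrightarrow> e' \<noteq> e''
     \<Longrightarrow> I e \<inter> I e' \<inter> I e'' \<noteq> {}"
  shows "\<exists>w. \<forall>e\<in>X. w \<in> I e"
proof (rule ccontr)
  assume nc: "\<not> ?thesis"
  obtain e1 where e1: "e1 \<in> X" using assms(2) by auto
  obtain a b where ab: "a \<noteq> b" "I e1 = {a,b}" using assms(3)[OF e1] by (meson card_2_iff)
  obtain e2 where e2: "e2 \<in> X" "a \<notin> I e2" using nc by auto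
  obtain e3 where e3: "e3 \<in> X" "b \<notin> I e3" using nc by auto
  have "b \<in> I e2" using assms(4)[OF e1 e2(1)] ab e2 by auto
  have "a \<in> I e3" using assms(4)[OF e1 e3(1)] ab e3 by auto
  have "I e1 \<inter> I e2 \<inter> I e3 \<noteq> {}"
    using assms(5)[OF e1 e2(1) e3(1)] ab e2 e3 \<open>b \<in> I e2\<close> \<open>a \<in> I e3\<close> by auto
  then show False using ab e2 e3 by auto
qed

lemma tri_shape: assumes "card (I x) = 2" "card (I y) = 2" "card (I z) = 2"
  "I x \<inter> I y \<noteq> {}" "I y \<inter> I z \<noteq> {}" "I x \<inter> I z \<noteq> {}"
  "I x \<noteq> I y" "I y \<noteq> I z" "I x \<noteq> I z" "I x \<inter> I y \<inter> I z = {}"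
  shows "\<exists>a b c. a \<noteq> b \<and> b \<noteq> c \<and> a \<noteq> c \<and> I x = {a,b} \<and> I y = {b,c} \<and> I z = {c,a}"
proof -
  obtain a b where ab: "a \<noteq> b" "I x = {a,b}" using assms(1) by (meson card_2_iff)
  obtain p q where pq: "p \<noteq> q" "I y = {p,q}" using assms(2) by (meson card_2_iff)
  obtain r s where rs: "r \<noteq> s" "I z = {r,s}" using assms(3) by (meson card_2_iff)
  show ?thesis using ab pq rs assms(4-10) by (auto simp: doubleton_eq_iff)
qed

context ucg begin

lemma par_sub2: assumes "u \<in> V" "u' \<in> V" "u \<noteq> u'" "star E I u \<subseteq> star E I u'"
  "p \<in> star E I u" "p' \<in> star E I u" "p \<noteq> p'"
  shows "star E I u = {p,p'}" "I p = {u,u'}" "I p' = {u,u'}"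
proof -
  have all: "I e = {u,u'}" if "e \<in> star E I u" for e
  proof -
    have "e \<in> E" "u \<in> I e" "u' \<in> I e" using that assms(4) unfolding star_def by auto
    moreover obtain a b where "a \<noteq> b" "I e = {a,b}" using two[OF \<open>e \<in> E\<close>] .
    ultimately show ?thesis using assms(3) by (metis doubleton_eq_iff insertE singletonD)
  qed
  show "I p = {u,u'}" "I p' = {u,u'}" using all assms by auto
  show "star E I u = {p,p'}"
  proof
    show "{p,p'} \<subseteq> star E I u" using assms by auto
    show "star E I u \<subseteq> {p,p'}"
    proof
      fix e assume e: "e \<in> star E I u"
      show "e \<in> {p,p'}"
      proof (rule ccontr)
        assume "e \<notin> {p,p'}"
        moreover have "e \<in> E" "p \<in> E" "p' \<in> E" using e assms(5,6) unfolding star_def by auto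
        moreover have "I e = I p" "I e = I p'" using all[OF e] all[OF assms(5)] all[OF assms(6)] by auto
        ultimately show False using three_par[of e p p'] assms(7) by blast
      qed
    qed
  qed
qed

lemma par_char: assumes "card V \<noteq> 4" "e \<in> E" "e' \<in> E"
  shows "(e \<noteq> e' \<and> I e = I e') \<longleftrightarrow> (e \<noteq> e' \<and> \<not> dual_bar_adj I e e' \<and> nbr E I e = nbr E I e')"
proof
  assume h: "e \<noteq> e' \<and> I e = I e'"
  have "dual_bar_adj I e x = dual_bar_adj I e' x" for x
    using h unfolding dual_bar_adj_def by auto
  then show "e \<noteq> e' \<and> \<not> dual_bar_adj I e e' \<and> nbr E I e = nbr E I e'"
    using h unfolding nbr_def dual_bar_adj_def by auto
next
  assume h: "e \<noteq> e' \<and> \<not> dual_bar_adj I e e' \<and> nbr E I e = nbr E I e'"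
  show "e \<noteq> e' \<and> I e = I e'"
  proof (cases "I e \<inter> I e' = {}")
    case True
    then show ?thesis using twins[OF assms(2,3) True] h assms(1) by simp
  next
    case False
    then show ?thesis using h unfolding dual_bar_adj_def by auto
  qed
qed

end

locale ucpair = G1: ucg V1 E1 I1 + G2: ucg V2 E2 I2
  for V1 :: "'v1 set" and E1 :: "'e1 set" and I1 :: "'e1 \<Rightarrow> 'v1 set"
  and V2 :: "'v2 set" and E2 :: "'e2 set" and I2 :: "'e2 \<Rightarrow> 'v2 set" +
  fixes g :: "'e1 \<Rightarrow> 'e2"
  assumes bij: "bij_betw g E1 E2"
  and adj: "\<And>e e'. e \<in> E1 \<Longrightarrow> e' \<in> E1 \<Longrightarrow> dual_bar_adj I1 e e' \<longleftrightarrow> dual_bar_adj I2 (g e) (g e')"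
  and cardeq: "card V1 = card V2" and n3: "card V1 \<ge> 3" and n4: "card V1 \<noteq> 4"
begin

lemma ginj: "inj_on g E1" using bij_betw_imp_inj_on[OF bij] .
lemma gE: "e \<in> E1 \<Longrightarrow> g e \<in> E2" using bij_betw_apply[OF bij] .
lemma gsurj: "g ` E1 = E2" using bij_betw_imp_surj_on[OF bij] .

abbreviation "h \<equiv> the_inv_into E1 g"

lemma inv_pair: "ucpair V2 E2 I2 V1 E1 I1 h"
proof -
  have hb: "bij_betw h E2 E1" using bij by (rule bij_betw_the_inv_into)
  have hg: "g (h q) = q" if "q \<in> E2" for q using f_the_inv_into_f_bij_betw[OF bij that] .
  show ?thesis
  proof (intro ucpair.intro ucpair_axioms.intro)
    show "ucg V2 E2 I2" by (rule G2.ucg_axioms)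
    show "ucg V1 E1 I1" by (rule G1.ucg_axioms)
    show "bij_betw h E2 E1" by (rule hb)
    show "card V2 = card V1" "3 \<le> card V2" "card V2 \<noteq> 4" using cardeq n3 n4 by auto
    fix q q' assume q: "q \<in> E2" "q' \<in> E2"
    have "h q \<in> E1" "h q' \<in> E1" using bij_betw_apply[OF hb] q by auto
    then show "dual_bar_adj I2 q q' = dual_bar_adj I1 (h q) (h q')" using adj hg q by metis
  qed
qed

lemma nbr_img: assumes "e \<in> E1" shows "nbr E2 I2 (g e) = g ` nbr E1 I1 e"
proof
  show "g ` nbr E1 I1 e \<subseteq> nbr E2 I2 (g e)" using adj assms gE unfolding nbr_def by auto
  show "nbr E2 I2 (g e) \<subseteq> g ` nbr E1 I1 e"
  proof
    fix q assume "q \<in> nbr E2 I2 (g e)"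
    then have q: "q \<in> E2" "dual_bar_adj I2 (g e) q" unfolding nbr_def by auto
    then obtain x where x: "x \<in> E1" "q = g x" using gsurj by auto
    then show "q \<in> g ` nbr E1 I1 e" using q adj[OF assms x(1)] unfolding nbr_def by auto
  qed
qed

lemma par_pres: assumes "e \<in> E1" "e' \<in> E1"
  shows "(e \<noteq> e' \<and> I1 e = I1 e') \<longleftrightarrow> (g e \<noteq> g e' \<and> I2 (g e) = I2 (g e'))"
proof -
  have n4': "card V2 \<noteq> 4" using n4 cardeq by simp
  have sub: "nbr E1 I1 e \<subseteq> E1" "nbr E1 I1 e' \<subseteq> E1" unfolding nbr_def by auto
  have "nbr E1 I1 e = nbr E1 I1 e' \<longleftrightarrow> g ` nbr E1 I1 e = g ` nbr E1 I1 e'"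
    using inj_on_image_eq_iff[OF ginj sub] by simp
  moreover have "e \<noteq> e' \<longleftrightarrow> g e \<noteq> g e'" using ginj assms inj_on_eq_iff by metis
  ultimately show ?thesis
    using G1.par_char[OF n4 assms] G2.par_char[OF n4' gE[OF assms(1)] gE[OF assms(2)]]
      nbr_img[OF assms(1)] nbr_img[OF assms(2)] adj[OF assms] by auto
qed

lemma sh_pres: assumes "e \<in> E1" "e' \<in> E1"
  shows "I1 e \<inter> I1 e' \<noteq> {} \<longleftrightarrow> I2 (g e) \<inter> I2 (g e') \<noteq> {}"
proof (cases "e = e'")
  case True
  have "I1 e \<noteq> {}" "I2 (g e) \<noteq> {}" using G1.card2[OF assms(1)] G2.card2[OF gE[OF assms(1)]] by auto
  then show ?thesis using True by auto
next
  case False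
  then have ne: "g e \<noteq> g e'" using ginj assms inj_on_eq_iff by metis
  have "I1 e \<inter> I1 e' \<noteq> {} \<longleftrightarrow> dual_bar_adj I1 e e' \<or> (e \<noteq> e' \<and> I1 e = I1 e')"
    using False G1.card2[OF assms(1)] unfolding dual_bar_adj_def by auto
  moreover have "I2 (g e) \<inter> I2 (g e') \<noteq> {} \<longleftrightarrow> dual_bar_adj I2 (g e) (g e') \<or> (g e \<noteq> g e' \<and> I2 (g e) = I2 (g e'))"
    using ne G2.card2[OF gE[OF assms(1)]] unfolding dual_bar_adj_def by auto
  ultimately show ?thesis using adj[OF assms] par_pres[OF assms] by blast
qed


lemma triple: assumes "x \<in> star E1 I1 v" "y \<in> star E1 I1 v" "z \<in> star E1 I1 v"
  "x \<noteq> y" "y \<noteq> z" "x \<noteq> z"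
  shows "I2 (g x) \<inter> I2 (g y) \<inter> I2 (g z) \<noteq> {}"
proof
  assume nc: "I2 (g x) \<inter> I2 (g y) \<inter> I2 (g z) = {}"
  have E: "x \<in> E1" "y \<in> E1" "z \<in> E1" "v \<in> I1 x" "v \<in> I1 y" "v \<in> I1 z"
    using assms unfolding star_def by auto
  have s1: "I2 (g x) \<inter> I2 (g y) \<noteq> {}" "I2 (g y) \<inter> I2 (g z) \<noteq> {}" "I2 (g x) \<inter> I2 (g z) \<noteq> {}"
    using sh_pres[of x y] sh_pres[of y z] sh_pres[of x z] E by blast+
  have np: "I2 (g x) \<noteq> I2 (g y)" "I2 (g y) \<noteq> I2 (g z)" "I2 (g x) \<noteq> I2 (g z)"
    using nc s1 by auto
  obtain a b c where abc: "a \<noteq> b" "b \<noteq> c" "a \<noteq> c" "I2 (g x) = {a,b}" "I2 (g y) = {b,c}" "I2 (g z) = {c,a}"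
    using tri_shape[of I2 "g x" "g y" "g z", OF G2.card2[OF gE[OF E(1)]] G2.card2[OF gE[OF E(2)]] G2.card2[OF gE[OF E(3)]] s1(1,2,3) np nc] by blast
  have ev1: "G1.even3 e x y z" if e: "e \<in> E1" "e \<notin> {x,y,z}" for e
  proof -
    have "g e \<notin> {g x, g y, g z}" using e E ginj inj_on_eq_iff by (metis insertCI singletonD insertE)
    then have "G2.even3 (g e) (g x) (g y) (g z)"
      using G2.tri_even[OF gE[OF E(1)] gE[OF E(2)] gE[OF E(3)] abc(1,2,3,4,5,6) gE[OF e(1)]] by blast
    then show ?thesis unfolding G1.even3_def G2.even3_def G1.sh_def G2.sh_def
      using sh_pres[OF e(1) E(1)] sh_pres[OF e(1) E(2)] sh_pres[OF e(1) E(3)] by blast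
  qed
  have np1: "I1 x \<noteq> I1 y" "I1 y \<noteq> I1 z" "I1 x \<noteq> I1 z"
    using par_pres[of x y] par_pres[of y z] par_pres[of x z] E np assms(4-6) by auto
  obtain a' where a': "a' \<noteq> v" "I1 x = {v,a'}" using G1.two[OF E(1)] E(4) by (metis insert_commute insertE singletonD)
  obtain b' where b': "b' \<noteq> v" "I1 y = {v,b'}" using G1.two[OF E(2)] E(5) by (metis insert_commute insertE singletonD)
  obtain c' where c': "c' \<noteq> v" "I1 z = {v,c'}" using G1.two[OF E(3)] E(6) by (metis insert_commute insertE singletonD)
  have "distinct [v,a',b',c']" using a' b' c' np1 by auto
  then have "card V1 = 4" using G1.star_triple[OF E(1,2,3) _ a'(2) b'(2) c'(2) ev1] by blast
  then show False using n4 by simp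
qed

lemma star_sub: assumes "v \<in> V1" "card (star E1 I1 v) \<ge> 2"
  shows "\<exists>w\<in>V2. g ` star E1 I1 v \<subseteq> star E2 I2 w"
proof -
  let ?X = "g ` star E1 I1 v"
  have SE: "star E1 I1 v \<subseteq> E1" unfolding star_def by auto
  have ne: "star E1 I1 v \<noteq> {}" using assms(2) by auto
  have "\<exists>w. \<forall>q\<in>?X. w \<in> I2 q"
  proof (rule common_vertex)
    show "finite ?X" using G1.finE SE finite_subset by blast
    show "?X \<noteq> {}" using ne by auto
    show "card (I2 q) = 2" if "q \<in> ?X" for q using that SE gE G2.card2 by blast
    show "I2 q \<inter> I2 q' \<noteq> {}" if qs: "q \<in> ?X" "q' \<in> ?X" for q q'
    proof -
      obtain x y where "x \<in> star E1 I1 v" "y \<in> star E1 I1 v" "q = g x" "q' = g y" using qs by blast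
      moreover have "I1 x \<inter> I1 y \<noteq> {}" using calculation(1,2) unfolding star_def by auto
      ultimately show ?thesis using sh_pres SE by blast
    qed
    show "I2 q \<inter> I2 q' \<inter> I2 q'' \<noteq> {}" if qs: "q \<in> ?X" "q' \<in> ?X" "q'' \<in> ?X" "q \<noteq> q'" "q \<noteq> q''" "q' \<noteq> q''" for q q' q''
    proof -
      obtain x y z where "x \<in> star E1 I1 v" "y \<in> star E1 I1 v" "z \<in> star E1 I1 v" "q = g x" "q' = g y" "q'' = g z"
        using qs(1-3) by blast
      then show ?thesis using triple qs(4-6) by blast
    qed
  qed
  then obtain w where w: "\<forall>q\<in>?X. w \<in> I2 q" by blast
  obtain x where x: "x \<in> star E1 I1 v" using ne by auto
  have "w \<in> V2" using w x SE gE G2.IV by blast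
  moreover have "?X \<subseteq> star E2 I2 w" using w SE gE unfolding star_def by auto
  ultimately show ?thesis by blast
qed


lemma hE: "q \<in> E2 \<Longrightarrow> h q \<in> E1" using bij_betw_apply[OF bij_betw_the_inv_into[OF bij]] .
lemma hg: "q \<in> E2 \<Longrightarrow> g (h q) = q" using f_the_inv_into_f_bij_betw[OF bij] .
lemma gh: "e \<in> E1 \<Longrightarrow> h (g e) = e" using the_inv_into_f_f[OF ginj] .
lemma hinj: "inj_on h E2" using bij_betw_imp_inj_on[OF bij_betw_the_inv_into[OF bij]] .
lemma S1E: "star E1 I1 v \<subseteq> E1" and S2E: "star E2 I2 w \<subseteq> E2" unfolding star_def by auto
lemma finS1: "finite (star E1 I1 v)" using S1E G1.finE finite_subset by blast
lemma finS2: "finite (star E2 I2 w)" using S2E G2.finE finite_subset by blast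
lemma cardg: "A \<subseteq> E1 \<Longrightarrow> card (g ` A) = card A" using card_image inj_on_subset[OF ginj] by blast
lemma cardh: "A \<subseteq> E2 \<Longrightarrow> card (h ` A) = card A" using card_image inj_on_subset[OF hinj] by blast

lemma pull: assumes "h ` star E2 I2 w \<subseteq> star E1 I1 v'" shows "star E2 I2 w \<subseteq> g ` star E1 I1 v'"
proof
  fix q assume q: "q \<in> star E2 I2 w"
  then have "q \<in> E2" using S2E by blast
  then have "q = g (h q)" using hg by simp
  then show "q \<in> g ` star E1 I1 v'" using assms q by auto
qed

lemma gmem: assumes "e \<in> E1" "A \<subseteq> E1" "g e \<in> g ` A" shows "e \<in> A"
  using assms ginj by (metis (no_types, lifting) imageE inj_on_eq_iff subsetD)

lemma star_eq: assumes "v \<in> V1" "card (star E1 I1 v) \<ge> 2"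
  shows "\<exists>w\<in>V2. g ` star E1 I1 v = star E2 I2 w"
proof -
  note IS = ucpair.star_sub[OF inv_pair]
  obtain w where w: "w \<in> V2" "g ` star E1 I1 v \<subseteq> star E2 I2 w" using star_sub[OF assms] by blast
  have "card (star E2 I2 w) \<ge> 2" using card_mono[OF finS2 w(2)] cardg[OF S1E] assms(2) by simp
  then obtain v' where v': "v' \<in> V1" "h ` star E2 I2 w \<subseteq> star E1 I1 v'" using IS[OF w(1)] by blast
  have sub: "star E2 I2 w \<subseteq> g ` star E1 I1 v'" using pull[OF v'(2)] .
  show ?thesis
  proof (cases "v' = v")
    case True then show ?thesis using w sub by blast
  next
    case False
    have S11: "star E1 I1 v \<subseteq> star E1 I1 v'"
    proof
      fix e assume e: "e \<in> star E1 I1 v"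
      then have "g e \<in> g ` star E1 I1 v'" using w(2) sub by blast
      then show "e \<in> star E1 I1 v'" using gmem[OF _ S1E] e S1E by blast
    qed
    obtain p p' where pp: "p \<in> star E1 I1 v" "p' \<in> star E1 I1 v" "p \<noteq> p'"
    proof -
      have "\<not> card (star E1 I1 v) \<le> Suc 0" using assms(2) by simp
      then show ?thesis using that card_le_Suc0_iff_eq[OF finS1] by blast
    qed
    have Sv: "star E1 I1 v = {p,p'}" "I1 p = {v,v'}" "I1 p' = {v,v'}"
      using G1.par_sub2[OF assms(1) v'(1) _ S11 pp] False by auto
    have pE: "p \<in> E1" "p' \<in> E1" using pp S1E by auto
    have gpp: "g p \<noteq> g p'" "I2 (g p) = I2 (g p')" using par_pres[OF pE] pp Sv by auto
    obtain w1 w2 where ww: "w1 \<noteq> w2" "I2 (g p) = {w1,w2}" using G2.two[OF gE[OF pE(1)]] .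
    have gS: "g ` star E1 I1 v = {g p, g p'}" using Sv by auto
    have inS: "g p \<in> star E2 I2 u" "g p' \<in> star E2 I2 u" if "u \<in> {w1,w2}" for u
      using that ww gpp gE pE unfolding star_def by auto
    have wV: "w1 \<in> V2" "w2 \<in> V2" using G2.IV[OF gE[OF pE(1)]] ww by auto
    have key: "star E2 I2 u = {g p, g p'} \<or> star E2 I2 u \<subseteq> g ` star E1 I1 v'" if u: "u \<in> {w1,w2}" for u
    proof -
      have uV: "u \<in> V2" using u wV by auto
      have "{g p, g p'} \<subseteq> star E2 I2 u" using inS[OF u] by blast
      then have "card {g p, g p'} \<le> card (star E2 I2 u)" using card_mono[OF finS2] by blast
      moreover have "card {g p, g p'} = 2" using gpp(1) by simp
      ultimately have "card (star E2 I2 u) \<ge> 2" by simp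
      then obtain x where x: "x \<in> V1" "h ` star E2 I2 u \<subseteq> star E1 I1 x" using IS[OF uV] by blast
      have "p \<in> star E1 I1 x" using x(2) inS[OF u] gh[OF pE(1)] by (metis image_eqI subsetD)
      then have "x \<in> {v,v'}" using Sv unfolding star_def by auto
      then show ?thesis
      proof
        assume "x = v"
        then have "star E2 I2 u \<subseteq> {g p, g p'}" using pull[OF x(2)] gS by auto
        then show ?thesis using inS[OF u] by auto
      next
        assume "x \<in> {v'}"
        then show ?thesis using pull[OF x(2)] by auto
      qed
    qed
    show ?thesis
    proof (cases "star E2 I2 w1 = {g p, g p'} \<or> star E2 I2 w2 = {g p, g p'}")
      case True then show ?thesis using gS wV by auto
    next
      case nf: False
      then have s1: "star E2 I2 w1 \<subseteq> g ` star E1 I1 v'" "star E2 I2 w2 \<subseteq> g ` star E1 I1 v'"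
        using key by auto
      have "card (star E1 I1 v') \<ge> 2" using card_mono[OF finS1 S11] assms(2) by simp
      then obtain w' where w': "w' \<in> V2" "g ` star E1 I1 v' \<subseteq> star E2 I2 w'" using star_sub[OF v'(1)] by blast
      have "g p \<in> star E2 I2 w'" using w' s1 inS[of w1] by auto
      then have "w' \<in> {w1,w2}" using ww unfolding star_def by auto
      then show ?thesis
      proof
        assume "w' = w1"
        then have "star E2 I2 w2 = {g p, g p'}"
          using G2.par_sub2[OF wV(2) wV(1) _ _ inS[of w2] gpp(1)] ww s1 w' by auto
        then show ?thesis using nf by blast
      next
        assume "w' \<in> {w2}"
        then have "star E2 I2 w1 = {g p, g p'}"
          using G2.par_sub2[OF wV(1) wV(2) _ _ inS[of w1] gpp(1)] ww s1 w' by auto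
        then show ?thesis using nf by blast
      qed
    qed
  qed
qed


lemma hg_img: assumes "A \<subseteq> E1" shows "h ` g ` A = A"
proof -
  have "h ` g ` A = (\<lambda>x. h (g x)) ` A" by (simp add: image_image)
  also have "\<dots> = id ` A" using assms gh by (intro image_cong) auto
  finally show ?thesis by simp
qed

lemma star_leaf: assumes "v \<in> V1" "star E1 I1 v = {e}"
  shows "\<exists>w\<in>V2. g ` star E1 I1 v = star E2 I2 w"
proof -
  have e: "e \<in> E1" "v \<in> I1 e" using assms(2) unfolding star_def by auto
  obtain u where u: "u \<noteq> v" "I1 e = {v,u}" using G1.two[OF e(1)] e(2) by (metis insert_commute insertE singletonD)
  have uV: "u \<in> V1" using G1.IV[OF e(1)] u by auto
  have eu: "e \<in> star E1 I1 u" using e u unfolding star_def by auto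
  have cu: "card (star E1 I1 u) \<ge> 2"
  proof (rule ccontr)
    assume "\<not> ?thesis"
    then have "card (star E1 I1 u) \<le> Suc 0" by simp
    then have "star E1 I1 u = {e}" using card_le_Suc0_iff_eq[OF finS1] eu by blast
    then show False using G1.leaf_nb[OF n3 e(1) _ _ assms(2)] u by (metis insert_commute)
  qed
  obtain w where w: "w \<in> V2" "g ` star E1 I1 u = star E2 I2 w" using star_eq[OF uV cu] by blast
  have "g e \<in> star E2 I2 w" using w eu by blast
  then have "w \<in> I2 (g e)" unfolding star_def by auto
  then obtain w' where w': "w' \<noteq> w" "I2 (g e) = {w,w'}" using G2.two[OF gE[OF e(1)]] by (metis insert_commute insertE singletonD)
  have w'V: "w' \<in> V2" using G2.IV[OF gE[OF e(1)]] w' by auto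
  have ge: "g e \<in> star E2 I2 w'" using w' gE[OF e(1)] unfolding star_def by auto
  have "\<not> card (star E2 I2 w') \<ge> 2"
  proof
    assume c2: "card (star E2 I2 w') \<ge> 2"
    obtain x where x: "x \<in> V1" "h ` star E2 I2 w' = star E1 I1 x"
      using ucpair.star_eq[OF inv_pair w'V c2] by blast
    have "e \<in> star E1 I1 x" using x(2) ge gh[OF e(1)] by (metis image_eqI)
    then have "x \<in> {v,u}" using u unfolding star_def by auto
    then show False
    proof
      assume "x = v"
      have "card (h ` star E2 I2 w') = card (star E2 I2 w')" by (rule cardh[OF S2E])
      moreover have "h ` star E2 I2 w' = {e}" using x(2) assms(2) \<open>x = v\<close> by simp
      ultimately have "card (star E2 I2 w') = 1" by simp
      then show False using c2 by simp
    next
      assume "x \<in> {u}"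
      then have "h ` star E2 I2 w' = h ` star E2 I2 w" using x(2) w(2)[symmetric] hg_img[OF S1E] by simp
      then have "star E2 I2 w' = star E2 I2 w" using inj_on_image_eq_iff[OF hinj S2E S2E] by blast
      then show False using G2.star_inj[OF _ w'V w(1) w'(1)] n3 cardeq by simp
    qed
  qed
  then have "card (star E2 I2 w') \<le> Suc 0" by simp
  then have "star E2 I2 w' = {g e}" using card_le_Suc0_iff_eq[OF finS2] ge by blast
  then show ?thesis using w'V assms(2) by auto
qed

lemma star_all: assumes "v \<in> V1" shows "\<exists>w\<in>V2. g ` star E1 I1 v = star E2 I2 w"
proof (cases "card (star E1 I1 v) \<ge> 2")
  case True then show ?thesis using star_eq[OF assms] by blast
next
  case False
  have "star E1 I1 v \<noteq> {}" using G1.star_nonempty[OF _ assms] n3 by simp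
  then obtain e where "e \<in> star E1 I1 v" by blast
  moreover have "card (star E1 I1 v) \<le> Suc 0" using False by simp
  ultimately have "star E1 I1 v = {e}" using card_le_Suc0_iff_eq[OF finS1] by blast
  then show ?thesis using star_leaf[OF assms] by blast
qed

lemma iso: "mg_iso V1 E1 I1 V2 E2 I2"
proof -
  define f where "f v = (SOME w. w \<in> V2 \<and> g ` star E1 I1 v = star E2 I2 w)" for v
  have f: "f v \<in> V2" "g ` star E1 I1 v = star E2 I2 (f v)" if "v \<in> V1" for v
    using someI_ex[OF star_all[OF that, unfolded Bex_def]] unfolding f_def by blast+
  have inj: "inj_on f V1"
  proof
    fix u v assume uv: "u \<in> V1" "v \<in> V1" "f u = f v"
    then have "g ` star E1 I1 u = g ` star E1 I1 v" using f by metis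
    then have "star E1 I1 u = star E1 I1 v" using inj_on_image_eq_iff[OF ginj S1E S1E] by blast
    then show "u = v" using G1.star_inj[OF n3 uv(1,2)] by blast
  qed
  have "f ` V1 \<subseteq> V2" using f by blast
  moreover have "card (f ` V1) = card V2" using card_image[OF inj] cardeq by simp
  ultimately have fV: "f ` V1 = V2" using card_subset_eq[OF G2.finV] by blast
  have bf: "bij_betw f V1 V2" using inj fV unfolding bij_betw_def by blast
  have "I2 (g e) = f ` I1 e" if e: "e \<in> E1" for e
  proof
    show "I2 (g e) \<subseteq> f ` I1 e"
    proof
      fix x assume x: "x \<in> I2 (g e)"
      then have "x \<in> V2" using G2.IV gE e by blast
      then obtain v where v: "v \<in> V1" "x = f v" using fV by blast
      then have "g e \<in> g ` star E1 I1 v" using f(2)[OF v(1)] x gE[OF e] unfolding star_def by auto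
      then have "e \<in> star E1 I1 v" using gmem[OF e S1E] by blast
      then show "x \<in> f ` I1 e" using v unfolding star_def by auto
    qed
    show "f ` I1 e \<subseteq> I2 (g e)"
    proof
      fix x assume "x \<in> f ` I1 e"
      then obtain v where v: "v \<in> I1 e" "x = f v" by blast
      have vV: "v \<in> V1" using G1.IV e v by blast
      have "e \<in> star E1 I1 v" using e v unfolding star_def by auto
      then have "g e \<in> star E2 I2 (f v)" using f(2)[OF vV] by blast
      then show "x \<in> I2 (g e)" using v unfolding star_def by auto
    qed
  qed
  then show ?thesis unfolding mg_iso_def using bf bij by blast
qed

end

lemma mg_iso_sym: assumes "multigraph V1 E1 I1" "mg_iso V1 E1 I1 V2 E2 I2"
  shows "mg_iso V2 E2 I2 V1 E1 I1"
proof -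
  obtain f g where fg: "bij_betw f V1 V2" "bij_betw g E1 E2" "\<And>e. e \<in> E1 \<Longrightarrow> I2 (g e) = f ` I1 e"
    using assms(2) unfolding mg_iso_def by blast
  let ?f = "the_inv_into V1 f" and ?g = "the_inv_into E1 g"
  have b1: "bij_betw ?f V2 V1" "bij_betw ?g E2 E1"
    using bij_betw_the_inv_into[OF fg(1)] bij_betw_the_inv_into[OF fg(2)] by simp_all
  have "I1 (?g q) = ?f ` I2 q" if q: "q \<in> E2" for q
  proof -
    have gq: "?g q \<in> E1" "g (?g q) = q"
      using bij_betw_apply[OF b1(2) q] f_the_inv_into_f_bij_betw[OF fg(2) q] by simp_all
    have sub: "I1 (?g q) \<subseteq> V1" using assms(1) gq unfolding multigraph_def by blast
    have "I2 q = f ` I1 (?g q)" using fg(3)[OF gq(1)] gq(2) by simp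
    then have "?f ` I2 q = ?f ` f ` I1 (?g q)" by simp
    also have "\<dots> = I1 (?g q)"
    proof -
      have "\<forall>x\<in>I1 (?g q). ?f (f x) = x" using sub the_inv_into_f_f[OF bij_betw_imp_inj_on[OF fg(1)]] by blast
      then have "(\<lambda>x. ?f (f x)) ` I1 (?g q) = id ` I1 (?g q)" by (intro image_cong) auto
      then show ?thesis by (simp add: image_image)
    qed
    finally show ?thesis by simp
  qed
  then show ?thesis unfolding mg_iso_def using b1 by blast
qed

lemma mg_iso_trans: assumes "mg_iso V1 E1 I1 V2 E2 I2" "mg_iso V2 E2 I2 V3 E3 I3"
  shows "mg_iso V1 E1 I1 V3 E3 I3"
proof -
  obtain f g where fg: "bij_betw f V1 V2" "bij_betw g E1 E2" "\<And>e. e \<in> E1 \<Longrightarrow> I2 (g e) = f ` I1 e"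
    using assms(1) unfolding mg_iso_def by blast
  obtain f' g' where fg': "bij_betw f' V2 V3" "bij_betw g' E2 E3" "\<And>e. e \<in> E2 \<Longrightarrow> I3 (g' e) = f' ` I2 e"
    using assms(2) unfolding mg_iso_def by blast
  have "bij_betw (f' \<circ> f) V1 V3" "bij_betw (g' \<circ> g) E1 E3"
    using bij_betw_trans[OF fg(1) fg'(1)] bij_betw_trans[OF fg(2) fg'(2)] by simp_all
  moreover have "I3 ((g' \<circ> g) e) = (f' \<circ> f) ` I1 e" if "e \<in> E1" for e
    using fg(3)[OF that] fg'(3)[OF bij_betw_apply[OF fg(2) that]] by (simp add: image_comp)
  ultimately show ?thesis unfolding mg_iso_def by blast
qed

lemma mg_iso_dual: assumes "multigraph V1 E1 I1" "mg_iso V1 E1 I1 V2 E2 I2"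
  shows "dual_bar_iso E1 I1 E2 I2"
proof -
  obtain f g where fg: "bij_betw f V1 V2" "bij_betw g E1 E2" "\<And>e. e \<in> E1 \<Longrightarrow> I2 (g e) = f ` I1 e"
    using assms(2) unfolding mg_iso_def by blast
  have fi: "inj_on f V1" and gi: "inj_on g E1"
    using bij_betw_imp_inj_on[OF fg(1)] bij_betw_imp_inj_on[OF fg(2)] by simp_all
  have "dual_bar_adj I1 e e' \<longleftrightarrow> dual_bar_adj I2 (g e) (g e')" if e: "e \<in> E1" "e' \<in> E1" for e e'
  proof -
    have sub: "I1 e \<subseteq> V1" "I1 e' \<subseteq> V1" using assms(1) e unfolding multigraph_def by simp_all
    have "f ` I1 e \<inter> f ` I1 e' = f ` (I1 e \<inter> I1 e')" using inj_on_image_Int[OF fi sub] by simp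
    moreover have "f ` I1 e = f ` I1 e' \<longleftrightarrow> I1 e = I1 e'" using inj_on_image_eq_iff[OF fi sub] .
    moreover have "g e = g e' \<longleftrightarrow> e = e'" using gi e inj_on_eq_iff by metis
    ultimately show ?thesis unfolding dual_bar_adj_def using fg(3) e by auto
  qed
  then show ?thesis unfolding dual_bar_iso_def using fg(2) by blast
qed

lemma dual_sym: assumes "dual_bar_iso E1 I1 E2 I2" shows "dual_bar_iso E2 I2 E1 I1"
proof -
  obtain g where g: "bij_betw g E1 E2" "\<And>e e'. e \<in> E1 \<Longrightarrow> e' \<in> E1 \<Longrightarrow> dual_bar_adj I1 e e' \<longleftrightarrow> dual_bar_adj I2 (g e) (g e')"
    using assms unfolding dual_bar_iso_def by blast
  let ?h = "the_inv_into E1 g"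
  have hb: "bij_betw ?h E2 E1" using bij_betw_the_inv_into[OF g(1)] by simp
  have "dual_bar_adj I2 q q' \<longleftrightarrow> dual_bar_adj I1 (?h q) (?h q')" if "q \<in> E2" "q' \<in> E2" for q q'
    using g(2)[of "?h q" "?h q'"] bij_betw_apply[OF hb] f_the_inv_into_f_bij_betw[OF g(1)] that by metis
  then show ?thesis unfolding dual_bar_iso_def using hb by blast
qed

lemma dual_trans: assumes "dual_bar_iso E1 I1 E2 I2" "dual_bar_iso E2 I2 E3 I3" shows "dual_bar_iso E1 I1 E3 I3"
proof -
  obtain g where g: "bij_betw g E1 E2" "\<And>e e'. e \<in> E1 \<Longrightarrow> e' \<in> E1 \<Longrightarrow> dual_bar_adj I1 e e' \<longleftrightarrow> dual_bar_adj I2 (g e) (g e')"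
    using assms(1) unfolding dual_bar_iso_def by blast
  obtain g' where g': "bij_betw g' E2 E3" "\<And>e e'. e \<in> E2 \<Longrightarrow> e' \<in> E2 \<Longrightarrow> dual_bar_adj I2 e e' \<longleftrightarrow> dual_bar_adj I3 (g' e) (g' e')"
    using assms(2) unfolding dual_bar_iso_def by blast
  have "bij_betw (g' \<circ> g) E1 E3" using bij_betw_trans[OF g(1) g'(1)] by simp
  moreover have "dual_bar_adj I1 e e' \<longleftrightarrow> dual_bar_adj I3 ((g' \<circ> g) e) ((g' \<circ> g) e')" if "e \<in> E1" "e' \<in> E1" for e e'
    using g(2)[OF that] g'(2) bij_betw_apply[OF g(1)] that by simp
  ultimately show ?thesis unfolding dual_bar_iso_def by blast
qed

definition exT5 :: "nat \<Rightarrow> nat set" where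
  "exT5 e = (if e = 0 then {0, 1} else if e = 1 then {0, 1} else if e = 2 then {1, 2} else {2, 3})"

definition UP1 :: "'e set \<Rightarrow> ('e \<Rightarrow> 'v set) \<Rightarrow> bool" where
  "UP1 E I \<longleftrightarrow> (\<exists>e\<in>E. \<forall>e'\<in>E. e' \<noteq> e \<longrightarrow> dual_bar_adj I e e')"

definition UP2 :: "'e set \<Rightarrow> ('e \<Rightarrow> 'v set) \<Rightarrow> bool" where
  "UP2 E I \<longleftrightarrow> (\<exists>e\<in>E. \<exists>e''\<in>E. e \<noteq> e'' \<and> (\<forall>e'\<in>E. e' \<noteq> e \<longrightarrow> dual_bar_adj I e e')
      \<and> (\<forall>e'\<in>E. e' \<noteq> e'' \<longrightarrow> dual_bar_adj I e'' e'))"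

lemma UP_A1: "UP1 exE exA1" "UP2 exE exA1"
  unfolding UP1_def UP2_def exE_def by (simp_all add: dual_bar_adj_def exA1_def doubleton_eq_iff)
lemma UP_B1: "UP1 exE exB1" "UP2 exE exB1"
  unfolding UP1_def UP2_def exE_def by (simp_all add: dual_bar_adj_def exB1_def doubleton_eq_iff)
lemma UP_A2: "\<not> UP1 exE exA2" "\<not> UP2 exE exA2"
  unfolding UP1_def UP2_def exE_def by (simp_all add: dual_bar_adj_def exA2_def doubleton_eq_iff)
lemma UP_B2: "\<not> UP1 exE exB2" "\<not> UP2 exE exB2"
  unfolding UP1_def UP2_def exE_def by (simp_all add: dual_bar_adj_def exB2_def doubleton_eq_iff)
lemma UP_T5: "UP1 exE exT5" "\<not> UP2 exE exT5"
  unfolding UP1_def UP2_def exE_def by (simp_all add: dual_bar_adj_def exT5_def doubleton_eq_iff)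

lemma UP_pres1: assumes "dual_bar_iso E1 I1 E2 I2" shows "UP1 E1 I1 \<Longrightarrow> UP1 E2 I2" and "UP2 E1 I1 \<Longrightarrow> UP2 E2 I2"
proof -
  obtain g where g: "bij_betw g E1 E2" "\<And>e e'. e \<in> E1 \<Longrightarrow> e' \<in> E1 \<Longrightarrow> dual_bar_adj I1 e e' \<longleftrightarrow> dual_bar_adj I2 (g e) (g e')"
    using assms unfolding dual_bar_iso_def by blast
  have gi: "inj_on g E1" using bij_betw_imp_inj_on[OF g(1)] by simp
  have gs: "g ` E1 = E2" using bij_betw_imp_surj_on[OF g(1)] by simp
  have tr: "\<forall>q\<in>E2. q \<noteq> g e \<longrightarrow> dual_bar_adj I2 (g e) q"
    if e: "e \<in> E1" "\<forall>e'\<in>E1. e' \<noteq> e \<longrightarrow> dual_bar_adj I1 e e'" for e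
  proof (intro ballI impI)
    fix q assume q: "q \<in> E2" "q \<noteq> g e"
    then obtain e' where e': "e' \<in> E1" "q = g e'" using gs by blast
    then have "e' \<noteq> e" using q by blast
    then show "dual_bar_adj I2 (g e) q" using e e' g(2) by blast
  qed
  show "UP1 E1 I1 \<Longrightarrow> UP1 E2 I2"
  proof -
    assume "UP1 E1 I1"
    then obtain e where "e \<in> E1" "\<forall>e'\<in>E1. e' \<noteq> e \<longrightarrow> dual_bar_adj I1 e e'" unfolding UP1_def by blast
    then show ?thesis unfolding UP1_def using tr bij_betw_apply[OF g(1)] by blast
  qed
  show "UP2 E1 I1 \<Longrightarrow> UP2 E2 I2"
  proof -
    assume "UP2 E1 I1"
    then obtain e e'' where ee: "e \<in> E1" "e'' \<in> E1" "e \<noteq> e''" "\<forall>e'\<in>E1. e' \<noteq> e \<longrightarrow> dual_bar_adj I1 e e'"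
      "\<forall>e'\<in>E1. e' \<noteq> e'' \<longrightarrow> dual_bar_adj I1 e'' e'" unfolding UP2_def by blast
    have "g e \<noteq> g e''" using gi ee inj_on_eq_iff by metis
    then show ?thesis unfolding UP2_def using tr[OF ee(1,4)] tr[OF ee(2,5)] bij_betw_apply[OF g(1)] ee(1,2) by blast
  qed
qed

lemma UP_pres: assumes "dual_bar_iso E1 I1 E2 I2" shows "UP1 E1 I1 \<longleftrightarrow> UP1 E2 I2" "UP2 E1 I1 \<longleftrightarrow> UP2 E2 I2"
  using UP_pres1[OF assms] UP_pres1[OF dual_sym[OF assms]] by blast+

definition fmap :: "'a \<Rightarrow> 'a \<Rightarrow> 'a \<Rightarrow> 'a \<Rightarrow> 'a \<Rightarrow> nat" where
  "fmap a b c d v = (if v = a then 0 else if v = b then 1 else if v = c then 2 else 3)"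

lemma fmap_bij: assumes "distinct [a,b,c,d]" shows "bij_betw (fmap a b c d) {a,b,c,d} {0,1,2,3}"
proof -
  have v: "fmap a b c d a = 0" "fmap a b c d b = 1" "fmap a b c d c = 2" "fmap a b c d d = 3"
    using assms by (auto simp: fmap_def)
  have "inj_on (fmap a b c d) {a,b,c,d}" unfolding inj_on_def using v by auto
  moreover have "fmap a b c d ` {a,b,c,d} = {0,1,2,3}" using v by simp
  ultimately show ?thesis unfolding bij_betw_def by blast
qed

lemma iso_model:
  assumes "distinct [a,b,c,d]" "V = {a,b,c,d}" "distinct [e0,e1,e2,e3]" "E = {e0,e1,e2,e3}"
   "M 0 = fmap a b c d ` I e0" "M 1 = fmap a b c d ` I e1" "M 2 = fmap a b c d ` I e2" "M 3 = fmap a b c d ` I e3"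
  shows "mg_iso V E I exV exE M"
proof -
  have "bij_betw (fmap a b c d) V exV" using fmap_bij[OF assms(1)] assms(2) by (simp add: exV_def)
  moreover have "bij_betw (fmap e0 e1 e2 e3) E exE" using fmap_bij[OF assms(3)] assms(4) by (simp add: exE_def)
  moreover have "M (fmap e0 e1 e2 e3 e) = fmap a b c d ` I e" if "e \<in> E" for e
    using that assms(3-8) by (auto simp: fmap_def)
  ultimately show ?thesis unfolding mg_iso_def by blast
qed

lemma fmap_v: assumes "distinct [a,b,c,d]"
  shows "fmap a b c d a = 0" "fmap a b c d b = 1" "fmap a b c d c = 2" "fmap a b c d d = 3"
  using assms by (auto simp: fmap_def)

context ucg begin

lemma pe: assumes "e \<in> E" "V = {a,b,c,d}"
  shows "I e = {a,b} \<or> I e = {a,c} \<or> I e = {a,d} \<or> I e = {b,c} \<or> I e = {b,d} \<or> I e = {c,d}"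
proof -
  obtain p q where pq: "p \<noteq> q" "I e = {p,q}" using two[OF assms(1)] .
  have "p \<in> {a,b,c,d}" "q \<in> {a,b,c,d}" using IV[OF assms(1)] pq assms(2) by auto
  then show ?thesis using pq by (auto simp: insert_commute)
qed

lemma casePaw: assumes nop: "\<And>e e'. e \<in> E \<Longrightarrow> e' \<in> E \<Longrightarrow> e \<noteq> e' \<Longrightarrow> I e \<noteq> I e'"
  and dv: "distinct [p,q,r,d]" "V = {p,q,r,d}" and E: "x \<in> E" "y \<in> E" "z \<in> E" "e \<in> E"
  and I: "I x = {p,q}" "I y = {q,r}" "I z = {r,p}" "I e = {r,d}"
  shows "mg_iso V E I exV exE exB1"
proof -
  have tri: "is_cycle E I {x,y,z}" using cyc3[OF E(1,2,3) _ _ _ I(1,2,3)] dv by simp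
  have EE: "E = {x,y,z,e}"
  proof
    show "{x,y,z,e} \<subseteq> E" using E by auto
    show "E \<subseteq> {x,y,z,e}"
    proof
      fix u assume u: "u \<in> E"
      have eqI: "u = t" if "t \<in> E" "I u = I t" for t using nop[OF u that(1)] that(2) by blast
      consider "I u = {p,q}" | "I u = {p,r}" | "I u = {p,d}" | "I u = {q,r}" | "I u = {q,d}" | "I u = {r,d}"
        using pe[OF u dv(2)] by blast
      then show "u \<in> {x,y,z,e}"
      proof cases
        case 1 then show ?thesis using eqI[OF E(1)] I by auto
      next
        case 2 then show ?thesis using eqI[OF E(3)] I by (auto simp: insert_commute)
      next
        case 3
        have "is_cycle E I {u,e,z}" using cyc3[OF u E(4) E(3), of p d r] dv 3 I by (auto simp: insert_commute)
        then have "{u,e,z} = {x,y,z}" using uniq tri by blast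
        then have "x \<in> {u,e,z}" by auto
        then show ?thesis using I 3 dv by (auto simp: doubleton_eq_iff)
      next
        case 4 then show ?thesis using eqI[OF E(2)] I by auto
      next
        case 5
        have "is_cycle E I {u,e,y}" using cyc3[OF u E(4) E(2), of q d r] dv 5 I by (auto simp: insert_commute)
        then have "{u,e,y} = {x,y,z}" using uniq tri by blast
        then have "x \<in> {u,e,y}" by auto
        then show ?thesis using I 5 dv by (auto simp: doubleton_eq_iff)
      next
        case 6 then show ?thesis using eqI[OF E(4)] I by auto
      qed
    qed
  qed
  have de: "distinct [x,y,z,e]" using I dv by (auto simp: doubleton_eq_iff)
  show ?thesis
    by (rule iso_model[OF dv(1,2) de EE]) (use I dv in \<open>simp_all add: fmap_v[OF dv(1)] exB1_def insert_commute\<close>)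
qed


lemma caseC4: assumes nop: "\<And>e e'. e \<in> E \<Longrightarrow> e' \<in> E \<Longrightarrow> e \<noteq> e' \<Longrightarrow> I e \<noteq> I e'"
  and dv: "distinct [a,b,c,d]" "V = {a,b,c,d}" and E: "x \<in> E" "y \<in> E" "z \<in> E" "w \<in> E"
  and I: "I x = {a,b}" "I y = {b,c}" "I z = {c,d}" "I w = {d,a}"
  shows "mg_iso V E I exV exE exB2"
proof -
  have cy: "is_cycle E I {x,y,z,w}" using cyc4[OF E dv(1) I] .
  have EE: "E = {x,y,z,w}"
  proof
    show "{x,y,z,w} \<subseteq> E" using E by auto
    show "E \<subseteq> {x,y,z,w}"
    proof
      fix u assume u: "u \<in> E"
      have eqI: "u = t" if "t \<in> E" "I u = I t" for t using nop[OF u that(1)] that(2) by blast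
      consider "I u = {a,b}" | "I u = {a,c}" | "I u = {a,d}" | "I u = {b,c}" | "I u = {b,d}" | "I u = {c,d}"
        using pe[OF u dv(2)] by blast
      then show "u \<in> {x,y,z,w}"
      proof cases
        case 1 then show ?thesis using eqI[OF E(1)] I by auto
      next
        case 2
        have "is_cycle E I {x,y,u}" using cyc3[OF E(1) E(2) u, of a b c] dv 2 I by (auto simp: insert_commute)
        then have "{x,y,u} = {x,y,z,w}" using uniq cy by blast
        then have "z \<in> {x,y,u}" by auto
        then show ?thesis using I 2 dv by (auto simp: doubleton_eq_iff)
      next
        case 3 then show ?thesis using eqI[OF E(4)] I by (auto simp: insert_commute)
      next
        case 4 then show ?thesis using eqI[OF E(2)] I by auto
      next
        case 5
        have "is_cycle E I {y,z,u}" using cyc3[OF E(2) E(3) u, of b c d] dv 5 I by (auto simp: insert_commute)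
        then have "{y,z,u} = {x,y,z,w}" using uniq cy by blast
        then have "x \<in> {y,z,u}" by auto
        then show ?thesis using I 5 dv by (auto simp: doubleton_eq_iff)
      next
        case 6 then show ?thesis using eqI[OF E(3)] I by auto
      qed
    qed
  qed
  have de: "distinct [x,y,z,w]" using I dv by (auto simp: doubleton_eq_iff)
  show ?thesis
    by (rule iso_model[OF dv(1,2) de EE]) (use I dv in \<open>simp_all add: fmap_v[OF dv(1)] exB2_def insert_commute\<close>)
qed

lemma caseT5: assumes dv: "distinct [x',x,y,y']" "V = {x',x,y,y'}" and E: "p \<in> E" "p' \<in> E" "s \<in> E" "r \<in> E"
  and pp: "p \<noteq> p'" and I: "I p = {x',x}" "I p' = {x',x}" "I s = {x,y}" "I r = {y,y'}"
  shows "mg_iso V E I exV exE exT5"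
proof -
  have c2: "is_cycle E I {p,p'}" using cyc2[OF E(1,2) pp] I by simp
  have cyc: "C = {p,p'}" if "is_cycle E I C" for C using uniq[OF that c2] .
  have nsr: "s \<notin> {p,p'}" "r \<notin> {p,p'}" using I dv by (auto simp: doubleton_eq_iff)
  have EE: "E = {p,p',s,r}"
  proof
    show "{p,p',s,r} \<subseteq> E" using E by auto
    show "E \<subseteq> {p,p',s,r}"
    proof
      fix u assume u: "u \<in> E"
      have eqI: "u = t" if "t \<in> E" "I u = I t" "t \<notin> {p,p'}" for t
      proof (rule ccontr)
        assume "u \<noteq> t"
        then have "{u,t} = {p,p'}" using cyc cyc2[OF u that(1)] that(2) by blast
        then show False using that(3) by auto
      qed
      consider "I u = {x',x}" | "I u = {x',y}" | "I u = {x',y'}" | "I u = {x,y}" | "I u = {x,y'}" | "I u = {y,y'}"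
        using pe[OF u dv(2)] by blast
      then show "u \<in> {p,p',s,r}"
      proof cases
        case 1 then show ?thesis using three_par[OF u E(1,2)] pp I by auto
      next
        case 2
        have "is_cycle E I {s,u,p}" using cyc3[OF E(3) u E(1), of x y x'] dv 2 I by (auto simp: insert_commute)
        then show ?thesis using cyc nsr by auto
      next
        case 3
        have "is_cycle E I {s,r,u,p}" using cyc4[OF E(3) E(4) u E(1), of x y y' x'] dv 3 I by (auto simp: insert_commute)
        then show ?thesis using cyc nsr by auto
      next
        case 4 then show ?thesis using eqI[OF E(3)] I nsr by auto
      next
        case 5
        have "is_cycle E I {s,r,u}" using cyc3[OF E(3) E(4) u, of x y y'] dv 5 I by (auto simp: insert_commute)
        then show ?thesis using cyc nsr by auto
      next
        case 6 then show ?thesis using eqI[OF E(4)] I nsr by auto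
      qed
    qed
  qed
  have de: "distinct [p,p',s,r]" using I dv pp by (auto simp: doubleton_eq_iff)
  show ?thesis
    by (rule iso_model[OF dv(1,2) de EE]) (use I dv in \<open>simp_all add: fmap_v[OF dv(1)] exT5_def insert_commute\<close>)
qed

end

context ucg begin

lemma caseA12: assumes dv: "distinct [x,x',c,d]" "V = {x,x',c,d}" and E: "p \<in> E" "p' \<in> E" "s \<in> E" "t \<in> E"
  and pp: "p \<noteq> p'" and I: "I p = {x,x'}" "I p' = {x,x'}" "I s = {x,c}" "I t = {y,d}"
  and y: "y = x \<or> y = x'" and nocd: "\<And>e. e \<in> E \<Longrightarrow> I e \<noteq> {c,d}"
  shows "mg_iso V E I exV exE exA1 \<or> mg_iso V E I exV exE exA2"
proof -
  have c2: "is_cycle E I {p,p'}" using cyc2[OF E(1,2) pp] I by simp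
  have cyc: "C = {p,p'}" if "is_cycle E I C" for C using uniq[OF that c2] .
  have nsr: "s \<notin> {p,p'}" "t \<notin> {p,p'}" using I dv y by (auto simp: doubleton_eq_iff)
  have EE: "E = {p,p',s,t}"
  proof
    show "{p,p',s,t} \<subseteq> E" using E by auto
    show "E \<subseteq> {p,p',s,t}"
    proof
      fix u assume u: "u \<in> E"
      have eqI: "u = t'" if "t' \<in> E" "I u = I t'" "t' \<notin> {p,p'}" for t'
      proof (rule ccontr)
        assume "u \<noteq> t'"
        then have "{u,t'} = {p,p'}" using cyc cyc2[OF u that(1)] that(2) by blast
        then show False using that(3) by auto
      qed
      consider "I u = {x,x'}" | "I u = {x,c}" | "I u = {x,d}" | "I u = {x',c}" | "I u = {x',d}" | "I u = {c,d}"
        using pe[OF u dv(2)] by blast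
      then show "u \<in> {p,p',s,t}"
      proof cases
        case 1 then show ?thesis using three_par[OF u E(1,2)] pp I by auto
      next
        case 2 then show ?thesis using eqI[OF E(3)] I nsr by auto
      next
        case 3
        show ?thesis
        proof (cases "y = x")
          case True then show ?thesis using eqI[OF E(4)] I nsr 3 by auto
        next
          case False
          then have "y = x'" using y by auto
          have "is_cycle E I {t,u,p}" using cyc3[OF E(4) u E(1), of x' d x] dv 3 I \<open>y = x'\<close> by (auto simp: insert_commute)
          then show ?thesis using cyc nsr by auto
        qed
      next
        case 4
        have "is_cycle E I {s,u,p}" using cyc3[OF E(3) u E(1), of x c x'] dv 4 I by (auto simp: insert_commute)
        then show ?thesis using cyc nsr by auto
      next
        case 5
        show ?thesis
        proof (cases "y = x'")
          case True then show ?thesis using eqI[OF E(4)] I nsr 5 by auto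
        next
          case False
          then have "y = x" using y by auto
          have "is_cycle E I {t,u,p}" using cyc3[OF E(4) u E(1), of x d x'] dv 5 I \<open>y = x\<close> by (auto simp: insert_commute)
          then show ?thesis using cyc nsr by auto
        qed
      next
        case 6 then show ?thesis using nocd u by blast
      qed
    qed
  qed
  have de: "distinct [p,p',s,t]" using I dv pp y by (auto simp: doubleton_eq_iff)
  show ?thesis
  proof (cases "y = x")
    case True
    have It: "I t = {x,d}" using I(4) True by simp
    have "mg_iso V E I exV exE exA1"
      by (rule iso_model[OF dv(1,2) de EE]) (use I(1-3) It in \<open>simp_all add: fmap_v[OF dv(1)] exA1_def\<close>)
    then show ?thesis by blast
  next
    case False
    then have "y = x'" using y by auto
    have It: "I t = {x',d}" using I(4) \<open>y = x'\<close> by simp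
    have "mg_iso V E I exV exE exA2"
      by (rule iso_model[OF dv(1,2) de EE]) (use I(1-3) It in \<open>simp_all add: fmap_v[OF dv(1)] exA2_def\<close>)
    then show ?thesis by blast
  qed
qed


lemma classA: assumes n: "card V = 4" and pp: "p \<in> E" "p' \<in> E" "p \<noteq> p'" "I p = I p'"
  shows "mg_iso V E I exV exE exA1 \<or> mg_iso V E I exV exE exA2 \<or> mg_iso V E I exV exE exT5"
proof -
  obtain a b where ab: "a \<noteq> b" "I p = {a,b}" using two[OF pp(1)] .
  have abV: "a \<in> V" "b \<in> V" using IV[OF pp(1)] ab by auto
  have "card (V - {a,b}) = 2" using n abV ab finV by (simp add: card_Diff_subset)
  then obtain c d where cd: "c \<noteq> d" "V - {a,b} = {c,d}" by (meson card_2_iff)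
  have dv: "distinct [a,b,c,d]" "V = {a,b,c,d}" using cd ab abV by auto
  have Ip': "I p' = {a,b}" using ab pp by simp
  show ?thesis
  proof (cases "\<exists>r\<in>E. I r = {c,d}")
    case True
    then obtain r where r: "r \<in> E" "I r = {c,d}" by blast
    have "\<exists>s\<in>E. I s = {a,c} \<or> I s = {a,d} \<or> I s = {b,c} \<or> I s = {b,d}"
    proof (rule ccontr)
      assume nn: "\<not> ?thesis"
      have "V \<subseteq> {c,d}"
      proof (rule closed[of c])
        fix e assume e: "e \<in> E" "I e \<inter> {c,d} \<noteq> {}"
        show "I e \<subseteq> {c,d}" using pe[OF e(1) dv(2)] nn e dv(1) by auto
      qed (use dv in auto)
      then show False using dv by auto
    qed
    then obtain s where s: "s \<in> E" "I s = {a,c} \<or> I s = {a,d} \<or> I s = {b,c} \<or> I s = {b,d}" by blast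
    have "mg_iso V E I exV exE exT5"
    proof -
      { assume "I s = {a,c}"
        then have ?thesis using caseT5[of b a c d p p' s r] dv pp ab Ip' r s by (auto simp: insert_commute) }
      moreover
      { assume "I s = {a,d}"
        then have ?thesis using caseT5[of b a d c p p' s r] dv pp ab Ip' r s by (auto simp: insert_commute) }
      moreover
      { assume "I s = {b,c}"
        then have ?thesis using caseT5[of a b c d p p' s r] dv pp ab Ip' r s by (auto simp: insert_commute) }
      moreover
      { assume "I s = {b,d}"
        then have ?thesis using caseT5[of a b d c p p' s r] dv pp ab Ip' r s by (auto simp: insert_commute) }
      ultimately show ?thesis using s(2) by blast
    qed
    then show ?thesis by blast
  next
    case False
    have c2: "card V \<ge> 2" using n by simp
    obtain s where s: "s \<in> E" "c \<in> I s" using star_nonempty[OF c2, of c] dv unfolding star_def by auto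
    obtain t where t: "t \<in> E" "d \<in> I t" using star_nonempty[OF c2, of d] dv unfolding star_def by auto
    have sc: "I s = {a,c} \<or> I s = {b,c}" using pe[OF s(1) dv(2)] s(2) False s(1) dv(1) by (auto simp: doubleton_eq_iff)
    have td: "I t = {a,d} \<or> I t = {b,d}" using pe[OF t(1) dv(2)] t(2) False t(1) dv(1) by (auto simp: doubleton_eq_iff)
    have nocd: "\<And>e. e \<in> E \<Longrightarrow> I e \<noteq> {c,d}" using False by blast
    from sc show ?thesis
    proof
      assume "I s = {a,c}"
      obtain y where "y = a \<or> y = b" "I t = {y,d}" using td by blast
      then show ?thesis using caseA12[of a b c d p p' s t y] dv pp ab Ip' \<open>I s = {a,c}\<close> s t nocd by auto
    next
      assume "I s = {b,c}"
      obtain y where "y = b \<or> y = a" "I t = {y,d}" using td by blast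
      moreover have "distinct [b,a,c,d]" "V = {b,a,c,d}" "I p = {b,a}" "I p' = {b,a}" using dv ab Ip' by (auto simp: insert_commute)
      ultimately show ?thesis using caseA12[of b a c d p p' s t y] pp \<open>I s = {b,c}\<close> s t nocd by auto
    qed
  qed
qed

end

context ucg begin

lemma cyc_deg: assumes "is_cycle E I C" "x \<in> C" "v \<in> I x" shows "card {e\<in>C. v \<in> I e} = 2"
  using assms unfolding is_cycle_def by blast

lemma cyc_other: assumes "is_cycle E I C" "x \<in> C" "v \<in> I x" shows "\<exists>y\<in>C. y \<noteq> x \<and> v \<in> I y"
proof -
  obtain u w where uw: "u \<noteq> w" "{e\<in>C. v \<in> I e} = {u,w}" using cyc_deg[OF assms] by (meson card_2_iff)
  have "x \<in> {u,w}" using uw assms by blast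
  then show ?thesis using uw by (metis (no_types, lifting) insertCI mem_Collect_eq)
qed

lemma cyc_no3: assumes "is_cycle E I C" "x \<in> C" "y \<in> C" "z \<in> C" "x \<noteq> y" "y \<noteq> z" "x \<noteq> z"
  "v \<in> I x" "v \<in> I y" "v \<in> I z" shows False
proof -
  have fC: "finite C" using assms(1) finE finite_subset unfolding is_cycle_def by blast
  have fin: "finite {e\<in>C. v \<in> I e}" using fC by simp
  have "card {x,y,z} \<le> card {e\<in>C. v \<in> I e}" by (rule card_mono[OF fin]) (use assms in auto)
  also have "\<dots> = 2" using cyc_deg[OF assms(1,2,8)] .
  finally have "card {x,y,z} \<le> 2" .
  moreover have "card {x,y,z} = 3" using assms(5-7) by simp
  ultimately show False by simp
qed

lemma classB: assumes n: "card V = 4" and nop: "\<And>e e'. e \<in> E \<Longrightarrow> e' \<in> E \<Longrightarrow> e \<noteq> e' \<Longrightarrow> I e \<noteq> I e'"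
  shows "mg_iso V E I exV exE exB1 \<or> mg_iso V E I exV exE exB2"
proof -
  obtain C where C: "is_cycle E I C" using uc unfolding unique_cycle_def by blast
  then obtain x where x: "x \<in> C" unfolding is_cycle_def by blast
  have CE: "C \<subseteq> E" using C unfolding is_cycle_def by blast
  have xE: "x \<in> E" using x CE by blast
  obtain a b where ab: "a \<noteq> b" "I x = {a,b}" using two[OF xE] .
  obtain y where y: "y \<in> C" "y \<noteq> x" "a \<in> I y" using cyc_other[OF C x] ab by auto
  have yE: "y \<in> E" using y CE by blast
  obtain c where c: "c \<noteq> a" "I y = {a,c}" using two[OF yE] y(3) by (metis insert_commute insertE singletonD)
  have cb: "c \<noteq> b" using nop[OF yE xE y(2)] c ab by auto
  obtain z where z: "z \<in> C" "z \<noteq> x" "b \<in> I z" using cyc_other[OF C x] ab by auto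
  have zE: "z \<in> E" using z CE by blast
  obtain d where d: "d \<noteq> b" "I z = {b,d}" using two[OF zE] z(3) by (metis insert_commute insertE singletonD)
  have da: "d \<noteq> a" using nop[OF zE xE z(2)] d ab by (auto simp: insert_commute)
  show ?thesis
  proof (cases "d = c")
    case True
    have abcV: "a \<in> V" "b \<in> V" "c \<in> V" using IV[OF xE] IV[OF yE] ab c by auto
    have "card (V - {a,b,c}) = 1" using n abcV ab cb c finV by (simp add: card_Diff_subset)
    then obtain d' where d': "V - {a,b,c} = {d'}" using card_1_singleton_iff[of "V - {a,b,c}"] by auto
    have dv: "distinct [a,b,c,d']" "V = {a,b,c,d'}" using d' ab c cb abcV by auto
    have "star E I d' \<noteq> {}" using star_nonempty[of d'] n dv by simp
    then obtain e where "e \<in> star E I d'" by blast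
    then have e: "e \<in> E" "d' \<in> I e" unfolding star_def by auto
    have "I e = {a,d'} \<or> I e = {b,d'} \<or> I e = {c,d'}" using pe[OF e(1) dv(2)] e(2)
    proof -
      have dn: "d' \<noteq> a" "d' \<noteq> b" "d' \<noteq> c" using dv(1) by auto
      show ?thesis using pe[OF e(1) dv(2)] e(2) by (elim disjE) (use dn in simp_all)
    qed
    moreover have Iz: "I z = {b,c}" using d True by simp
    moreover have Iy: "I y = {c,a}" using c by (simp add: insert_commute)
    moreover have dv1: "distinct [b,c,a,d']" "V = {b,c,a,d'}" using dv(1) apply auto[1] using dv(2) by (simp add: insert_commute)
    moreover have dv2: "distinct [c,a,b,d']" "V = {c,a,b,d'}" using dv(1) apply auto[1] using dv(2) by (simp add: insert_commute)
    ultimately show ?thesis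
    proof (elim disjE)
      assume "I e = {c,d'}"
      then show ?thesis using casePaw[OF nop dv xE zE yE e(1) ab(2) Iz Iy] by blast
    next
      assume "I e = {a,d'}"
      then show ?thesis using casePaw[OF nop dv1 zE yE xE e(1) Iz Iy ab(2)] by blast
    next
      assume "I e = {b,d'}"
      then show ?thesis using casePaw[OF nop dv2 yE xE zE e(1) Iy ab(2) Iz] by blast
    qed
  next
    case False
    have abcdV: "a \<in> V" "b \<in> V" "c \<in> V" "d \<in> V" using IV[OF xE] IV[OF yE] IV[OF zE] ab c d by auto
    have dv0: "distinct [a,b,c,d]" using ab c cb d da False by auto
    have "{a,b,c,d} \<subseteq> V" using abcdV by auto
    moreover have "card {a,b,c,d} = 4" using dv0 by simp
    ultimately have Vq: "V = {a,b,c,d}" using n finV by (metis card_subset_eq)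
    obtain w where w: "w \<in> C" "w \<noteq> y" "c \<in> I w" using cyc_other[OF C y(1)] c by auto
    have wE: "w \<in> E" using w CE by blast
    obtain t where t: "t \<noteq> c" "I w = {c,t}" using two[OF wE] w(3) by (metis insert_commute insertE singletonD)
    have ta: "t \<noteq> a" using nop[OF wE yE w(2)] t c by (auto simp: insert_commute)
    have tb: "t \<noteq> b"
    proof
      assume "t = b"
      have "w \<noteq> x" "w \<noteq> z" "x \<noteq> z" using t \<open>t = b\<close> ab c d dv0 z(2) by (auto simp: doubleton_eq_iff)
      then show False using cyc_no3[OF C x z(1) w(1)] ab d t \<open>t = b\<close> by auto
    qed
    have "t \<in> V" using IV[OF wE] t by auto
    then have "t = d" using Vq t ta tb by auto
    moreover have "distinct [a,b,d,c]" "V = {a,b,d,c}" using dv0 apply auto[1] using Vq by (simp add: insert_commute)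
    moreover have "I w = {d,c}" "I y = {c,a}" using t \<open>t = d\<close> c by (auto simp: insert_commute)
    ultimately have "mg_iso V E I exV exE exB2" using caseC4[OF nop _ _ xE zE wE yE ab(2) d(2)] by blast
    then show ?thesis by blast
  qed
qed

end

lemma same_model: assumes "multigraph V2 E2 I2" "mg_iso V1 E1 I1 exV exE M" "mg_iso V2 E2 I2 exV exE M"
  shows "mg_iso V1 E1 I1 V2 E2 I2"
  using mg_iso_trans[OF assms(2) mg_iso_sym[OF assms(1,3)]] .

lemma model_UP: assumes "multigraph V E I" "mg_iso V E I exV exE M"
  shows "UP1 E I = UP1 exE M" "UP2 E I = UP2 exE M"
  using UP_pres[OF mg_iso_dual[OF assms]] by blast+

lemma (in ucg) class4: assumes "card V = 4"
  shows "mg_iso V E I exV exE exA1 \<or> mg_iso V E I exV exE exA2 \<or> mg_iso V E I exV exE exT5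
    \<or> mg_iso V E I exV exE exB1 \<or> mg_iso V E I exV exE exB2"
proof (cases "\<exists>p\<in>E. \<exists>p'\<in>E. p \<noteq> p' \<and> I p = I p'")
  case True
  then obtain p p' where "p \<in> E" "p' \<in> E" "p \<noteq> p'" "I p = I p'" by blast
  then show ?thesis using classA[OF assms] by blast
next
  case False
  then have "\<And>e e'. e \<in> E \<Longrightarrow> e' \<in> E \<Longrightarrow> e \<noteq> e' \<Longrightarrow> I e \<noteq> I e'" by blast
  then show ?thesis using classB[OF assms] by blast
qed

lemma (in ucg) card_ge2: "card V \<ge> 2"
proof -
  obtain C where C: "is_cycle E I C" using uc unfolding unique_cycle_def by blast
  then obtain e where e: "e \<in> C" "C \<subseteq> E" unfolding is_cycle_def by blast
  then have "e \<in> E" by blast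
  then have "card (I e) \<le> card V" using IV finV card_mono by blast
  then show ?thesis using card2[OF \<open>e \<in> E\<close>] by simp
qed

theorem lemma7:
  fixes V1 :: "'v1 set" and E1 :: "'e1 set" and I1 :: "'e1 \<Rightarrow> 'v1 set"
    and V2 :: "'v2 set" and E2 :: "'e2 set" and I2 :: "'e2 \<Rightarrow> 'v2 set"
    and n :: nat
  assumes "multigraph V1 E1 I1" and "multigraph V2 E2 I2"
    and "mg_connected V1 E1 I1" and "mg_connected V2 E2 I2"
    and "card V1 = n" and "card V2 = n"
    and "unique_cycle E1 I1" and "unique_cycle E2 I2"
    and "dual_bar_iso E1 I1 E2 I2"
  shows "mg_iso V1 E1 I1 V2 E2 I2
    \<or> (mg_iso V1 E1 I1 exV exE exA1 \<and> mg_iso V2 E2 I2 exV exE exB1)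
    \<or> (mg_iso V1 E1 I1 exV exE exB1 \<and> mg_iso V2 E2 I2 exV exE exA1)
    \<or> (mg_iso V1 E1 I1 exV exE exA2 \<and> mg_iso V2 E2 I2 exV exE exB2)
    \<or> (mg_iso V1 E1 I1 exV exE exB2 \<and> mg_iso V2 E2 I2 exV exE exA2)"
proof -
  interpret G1: ucg V1 E1 I1 using assms by (simp add: ucg_def)
  interpret G2: ucg V2 E2 I2 using assms by (simp add: ucg_def)
  obtain g where g: "bij_betw g E1 E2" "\<And>e e'. e \<in> E1 \<Longrightarrow> e' \<in> E1 \<Longrightarrow> dual_bar_adj I1 e e' \<longleftrightarrow> dual_bar_adj I2 (g e) (g e')"
    using assms(9) unfolding dual_bar_iso_def by blast
  have n2: "n \<ge> 2" using G1.card_ge2 assms(5) by simp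
  consider "n = 2" | "n = 4" | "n \<noteq> 2 \<and> n \<noteq> 4" by blast
  then show ?thesis
  proof cases
    case 1
    have "card V1 = card V2" using assms(5,6) by simp
    then obtain f where f: "bij_betw f V1 V2" using finite_same_card_bij[OF G1.finV G2.finV] by blast
    have fV: "f ` V1 = V2" using bij_betw_imp_surj_on[OF f] .
    have "I2 (g e) = f ` I1 e" if e: "e \<in> E1" for e
    proof -
      have ge: "g e \<in> E2" using bij_betw_apply[OF g(1) e] .
      have c1: "card (I1 e) = card V1" using G1.card2[OF e] assms(5) 1 by simp
      have c2: "card (I2 (g e)) = card V2" using G2.card2[OF ge] assms(6) 1 by simp
      have "I1 e = V1" using card_subset_eq[OF G1.finV G1.IV[OF e] c1] .
      moreover have "I2 (g e) = V2" using card_subset_eq[OF G2.finV G2.IV[OF ge] c2] .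
      ultimately show ?thesis using fV by (simp only:)
    qed
    then have "mg_iso V1 E1 I1 V2 E2 I2" unfolding mg_iso_def using f g(1) by blast
    then show ?thesis by blast
  next
    case 2
    have n1: "card V1 = 4" and n2': "card V2 = 4" using assms(5,6) 2 by simp_all
    note c1 = G1.class4[OF n1] and c2 = G2.class4[OF n2']
    have U: "UP1 E1 I1 = UP1 E2 I2" "UP2 E1 I1 = UP2 E2 I2" using UP_pres[OF assms(9)] by blast+
    have M1: "UP1 E1 I1 = UP1 exE M \<and> UP2 E1 I1 = UP2 exE M" if "mg_iso V1 E1 I1 exV exE M" for M
      using model_UP[OF assms(1) that] by blast
    have M2: "UP1 E2 I2 = UP1 exE M \<and> UP2 E2 I2 = UP2 exE M" if "mg_iso V2 E2 I2 exV exE M" for M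
      using model_UP[OF assms(2) that] by blast
    have S: "mg_iso V1 E1 I1 V2 E2 I2" if "mg_iso V1 E1 I1 exV exE M" "mg_iso V2 E2 I2 exV exE M" for M
      using same_model[OF assms(2) that] .
    from c1 show ?thesis
    proof (elim disjE)
      assume h: "mg_iso V1 E1 I1 exV exE exA1"
      from c2 show ?thesis
      proof (elim disjE)
        assume h2: "mg_iso V2 E2 I2 exV exE exA1"
        show ?thesis using S[OF h h2] by blast
      next
        assume h2: "mg_iso V2 E2 I2 exV exE exA2"
        show ?thesis using M1[OF h] M2[OF h2] U UP_A1 UP_A2 UP_B1 UP_B2 UP_T5 by simp
      next
        assume h2: "mg_iso V2 E2 I2 exV exE exT5"
        show ?thesis using M1[OF h] M2[OF h2] U UP_A1 UP_A2 UP_B1 UP_B2 UP_T5 by simp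
      next
        assume h2: "mg_iso V2 E2 I2 exV exE exB1"
        show ?thesis using h h2 by blast
      next
        assume h2: "mg_iso V2 E2 I2 exV exE exB2"
        show ?thesis using M1[OF h] M2[OF h2] U UP_A1 UP_A2 UP_B1 UP_B2 UP_T5 by simp
      qed
    next
      assume h: "mg_iso V1 E1 I1 exV exE exA2"
      from c2 show ?thesis
      proof (elim disjE)
        assume h2: "mg_iso V2 E2 I2 exV exE exA1"
        show ?thesis using M1[OF h] M2[OF h2] U UP_A1 UP_A2 UP_B1 UP_B2 UP_T5 by simp
      next
        assume h2: "mg_iso V2 E2 I2 exV exE exA2"
        show ?thesis using S[OF h h2] by blast
      next
        assume h2: "mg_iso V2 E2 I2 exV exE exT5"
        show ?thesis using M1[OF h] M2[OF h2] U UP_A1 UP_A2 UP_B1 UP_B2 UP_T5 by simp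
      next
        assume h2: "mg_iso V2 E2 I2 exV exE exB1"
        show ?thesis using M1[OF h] M2[OF h2] U UP_A1 UP_A2 UP_B1 UP_B2 UP_T5 by simp
      next
        assume h2: "mg_iso V2 E2 I2 exV exE exB2"
        show ?thesis using h h2 by blast
      qed
    next
      assume h: "mg_iso V1 E1 I1 exV exE exT5"
      from c2 show ?thesis
      proof (elim disjE)
        assume h2: "mg_iso V2 E2 I2 exV exE exA1"
        show ?thesis using M1[OF h] M2[OF h2] U UP_A1 UP_A2 UP_B1 UP_B2 UP_T5 by simp
      next
        assume h2: "mg_iso V2 E2 I2 exV exE exA2"
        show ?thesis using M1[OF h] M2[OF h2] U UP_A1 UP_A2 UP_B1 UP_B2 UP_T5 by simp
      next
        assume h2: "mg_iso V2 E2 I2 exV exE exT5"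
        show ?thesis using S[OF h h2] by blast
      next
        assume h2: "mg_iso V2 E2 I2 exV exE exB1"
        show ?thesis using M1[OF h] M2[OF h2] U UP_A1 UP_A2 UP_B1 UP_B2 UP_T5 by simp
      next
        assume h2: "mg_iso V2 E2 I2 exV exE exB2"
        show ?thesis using M1[OF h] M2[OF h2] U UP_A1 UP_A2 UP_B1 UP_B2 UP_T5 by simp
      qed
    next
      assume h: "mg_iso V1 E1 I1 exV exE exB1"
      from c2 show ?thesis
      proof (elim disjE)
        assume h2: "mg_iso V2 E2 I2 exV exE exA1"
        show ?thesis using h h2 by blast
      next
        assume h2: "mg_iso V2 E2 I2 exV exE exA2"
        show ?thesis using M1[OF h] M2[OF h2] U UP_A1 UP_A2 UP_B1 UP_B2 UP_T5 by simp
      next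
        assume h2: "mg_iso V2 E2 I2 exV exE exT5"
        show ?thesis using M1[OF h] M2[OF h2] U UP_A1 UP_A2 UP_B1 UP_B2 UP_T5 by simp
      next
        assume h2: "mg_iso V2 E2 I2 exV exE exB1"
        show ?thesis using S[OF h h2] by blast
      next
        assume h2: "mg_iso V2 E2 I2 exV exE exB2"
        show ?thesis using M1[OF h] M2[OF h2] U UP_A1 UP_A2 UP_B1 UP_B2 UP_T5 by simp
      qed
    next
      assume h: "mg_iso V1 E1 I1 exV exE exB2"
      from c2 show ?thesis
      proof (elim disjE)
        assume h2: "mg_iso V2 E2 I2 exV exE exA1"
        show ?thesis using M1[OF h] M2[OF h2] U UP_A1 UP_A2 UP_B1 UP_B2 UP_T5 by simp
      next
        assume h2: "mg_iso V2 E2 I2 exV exE exA2"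
        show ?thesis using h h2 by blast
      next
        assume h2: "mg_iso V2 E2 I2 exV exE exT5"
        show ?thesis using M1[OF h] M2[OF h2] U UP_A1 UP_A2 UP_B1 UP_B2 UP_T5 by simp
      next
        assume h2: "mg_iso V2 E2 I2 exV exE exB1"
        show ?thesis using M1[OF h] M2[OF h2] U UP_A1 UP_A2 UP_B1 UP_B2 UP_T5 by simp
      next
        assume h2: "mg_iso V2 E2 I2 exV exE exB2"
        show ?thesis using S[OF h h2] by blast
      qed
    qed
  next
    case 3
    have "ucpair V1 E1 I1 V2 E2 I2 g"
    proof (intro ucpair.intro ucpair_axioms.intro)
      show "ucg V1 E1 I1" by (rule G1.ucg_axioms)
      show "ucg V2 E2 I2" by (rule G2.ucg_axioms)
      show "bij_betw g E1 E2" by (rule g(1))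
      show "\<And>e e'. e \<in> E1 \<Longrightarrow> e' \<in> E1 \<Longrightarrow> dual_bar_adj I1 e e' = dual_bar_adj I2 (g e) (g e')" by (rule g(2))
      show "card V1 = card V2" "3 \<le> card V1" "card V1 \<noteq> 4" using assms(5,6) 3 n2 by auto
    qed
    then have "mg_iso V1 E1 I1 V2 E2 I2" by (rule ucpair.iso)
    then show ?thesis by blast
  qed
qed

end
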